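(* For $\alpha_2\in\mathbb{C}$ consider the Hamiltonian system $$\frac{dq_1}{dt}=q_1^2+p_2,\quad \frac{dp_1}{dt}=-2q_1p_1+\alpha_2-\frac12,\quad \frac{dq_2}{dt}=-3p_2^2+p_1+\frac t2,\quad \frac{dp_2}{dt}=q_2,$$ with Hamiltonian $H=q_1^2p_1+(\frac12-\alpha_2)q_1-p_2^3+\frac t2p_2-\frac{q_2^2}{2}+p_1p_2$. Write $P:=p_1+t-2p_2^2+4q_1(q_2+q_1p_2)$ and $( * )=(q_1,p_1,q_2,p_2,t;\alpha_2)$. Define $$s_0:( * )\mapsto\left(q_1+\frac{\frac12-\alpha_2}{p_1},\,p_1,\,q_2,\,p_2,\,t;\,1-\alpha_2\right),$$ $$s_1:( * )\mapsto\Big(q_1+\frac{2\alpha_2+1}{2P},\ p_1-\frac{2(2\alpha_2+1)(q_2+2q_1p_2)}{P}+\frac{(2\alpha_2+1)^2(p_2+2q_1^2)}{P^2},$$ $$q_2-\frac{2(2\alpha_2+1)(p_2-q_1^2)}{P}+\frac{3(2\alpha_2+1)^2q_1}{P^2}+\frac{(2\alpha_2+1)^3}{2P^3},\ p_2-\frac{2(2\alpha_2+1)q_1}{P}-\frac{(2\alpha_2+1)^2}{2P^2},\ t;\,-1-\alpha_2\Big),$$ $$\pi:( * )\mapsto\left(-q_1,\,-P,\,-(q_2+4q_1(q_1^2+p_2)),\,-(p_2+2q_1^2),\,t;\,-\alpha_2\right).$$ Then $s_0,s_1,\pi$ are Bäcklund transformations of this system (each maps solutions of the system with parameter $\alpha_2$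 to solutions of the system with the transformed parameter), and they generate a group of Bäcklund transformations realizing the extended affine Weyl group of type $A_1^{(1)}$.
   Context: The extended affine Weyl group of type $A_1^{(1)}$ is the group generated by $s_0,s_1,\pi$ with the relations $s_0^2=s_1^2=\pi^2=1$ and $\pi s_0=s_1\pi$. A transformation is applied to a rational function $g$ of $(q_1,p_1,q_2,p_2,t,\alpha_2)$ by substituting the images of the variables and the parameter into $g$. *)

theory Defs
  imports "HOL-Analysis.Analysis"
begin

type_synonym pt = "complex \<times> complex \<times> complex \<times> complex \<times> complex \<times> complex"

definition c_q1 :: "pt \<Rightarrow> complex" where "c_q1 x = fst x"
definition c_p1 :: "pt \<Rightarrow> complex" where "c_p1 x = fst (snd x)"
definition c_q2 :: "pt \<Rightarrow> complex" where "c_q2 x = fst (snd (snd x))"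
definition c_p2 :: "pt \<Rightarrow> complex" where "c_p2 x = fst (snd (snd (snd x)))"
definition c_t  :: "pt \<Rightarrow> complex" where "c_t x = fst (snd (snd (snd (snd x))))"
definition c_a  :: "pt \<Rightarrow> complex" where "c_a x = snd (snd (snd (snd (snd x))))"

definition is_solution ::
  "complex \<Rightarrow> (complex \<Rightarrow> complex) \<Rightarrow> (complex \<Rightarrow> complex) \<Rightarrow>
   (complex \<Rightarrow> complex) \<Rightarrow> (complex \<Rightarrow> complex) \<Rightarrow> complex set \<Rightarrow> bool" where
  "is_solution a q1 p1 q2 p2 U \<longleftrightarrow> open U \<and>
     (\<forall>t\<in>U. (q1 has_field_derivative (q1 t ^ 2 + p2 t)) (at t) \<and>
             (p1 has_field_derivative (- 2 * q1 t * p1 t + a - 1/2)) (at t) \<and>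
             (q2 has_field_derivative (- 3 * p2 t ^ 2 + p1 t + t / 2)) (at t) \<and>
             (p2 has_field_derivative (q2 t)) (at t))"

text \<open>The Hamiltonian (for reference; the system above is its Hamilton system).\<close>
definition Ham :: "pt \<Rightarrow> complex" where
  "Ham x = (case x of (q1, p1, q2, p2, t, a) \<Rightarrow>
     q1^2 * p1 + (1/2 - a) * q1 - p2^3 + t/2 * p2 - q2^2/2 + p1 * p2)"

definition PP :: "pt \<Rightarrow> complex" where
  "PP x = (case x of (q1, p1, q2, p2, t, a) \<Rightarrow>
     p1 + t - 2 * p2^2 + 4 * q1 * (q2 + q1 * p2))"

definition s0 :: "pt \<Rightarrow> pt" where
  "s0 x = (case x of (q1, p1, q2, p2, t, a) \<Rightarrow>
     (q1 + (1/2 - a) / p1, p1, q2, p2, t, 1 - a))"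

definition s1 :: "pt \<Rightarrow> pt" where
  "s1 x = (case x of (q1, p1, q2, p2, t, a) \<Rightarrow>
     (let P = PP x; b = 2 * a + 1 in
     (q1 + b / (2 * P),
      p1 - 2 * b * (q2 + 2 * q1 * p2) / P + b^2 * (p2 + 2 * q1^2) / P^2,
      q2 - 2 * b * (p2 - q1^2) / P + 3 * b^2 * q1 / P^2 + b^3 / (2 * P^3),
      p2 - 2 * b * q1 / P - b^2 / (2 * P^2),
      t, - 1 - a)))"

definition pi_map :: "pt \<Rightarrow> pt" where
  "pi_map x = (case x of (q1, p1, q2, p2, t, a) \<Rightarrow>
     (- q1, - PP x, - (q2 + 4 * q1 * (q1^2 + p2)), - (p2 + 2 * q1^2), t, - a))"

definition backlund :: "(pt \<Rightarrow> pt) \<Rightarrow> (pt \<Rightarrow> bool) \<Rightarrow> (complex \<Rightarrow> complex) \<Rightarrow> bool" where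
  "backlund w D tau \<longleftrightarrow>
    (\<forall>a q1 p1 q2 p2 U.
       is_solution a q1 p1 q2 p2 U \<and> (\<forall>t\<in>U. D (q1 t, p1 t, q2 t, p2 t, t, a)) \<longrightarrow>
       (let W = (\<lambda>t. w (q1 t, p1 t, q2 t, p2 t, t, a)) in
         (\<forall>t\<in>U. c_t (W t) = t \<and> c_a (W t) = tau a) \<and>
         is_solution (tau a) (\<lambda>t. c_q1 (W t)) (\<lambda>t. c_p1 (W t))
                     (\<lambda>t. c_q2 (W t)) (\<lambda>t. c_p2 (W t)) U))"

end

theory Submission
  imports Defs
begin
lemma s1_point:
  fixes q1 p1 q2 p2 :: "complex \<Rightarrow> complex" and a t :: complex
  assumes d1: "(q1 has_field_derivative (q1 t ^ 2 + p2 t)) (at t)"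
   and d2: "(p1 has_field_derivative (- 2 * q1 t * p1 t + a - 1/2)) (at t)"
   and d3: "(q2 has_field_derivative (- 3 * p2 t ^ 2 + p1 t + t / 2)) (at t)"
   and d4: "(p2 has_field_derivative (q2 t)) (at t)"
   and nz: "p1 t + t - 2 * p2 t ^ 2 + 4 * q1 t * (q2 t + q1 t * p2 t) \<noteq> 0"
  defines "Pf \<equiv> \<lambda>t. p1 t + t - 2 * p2 t ^ 2 + 4 * q1 t * (q2 t + q1 t * p2 t)"
  defines "v \<equiv> \<lambda>t. (2*a+1) / (2 * Pf t)"
  defines "X1 \<equiv> \<lambda>t. q1 t + v t"
  defines "Y1 \<equiv> \<lambda>t. p1 t - 4 * v t * (q2 t + 2 * q1 t * p2 t) + 4 * v t ^ 2 * (p2 t + 2 * q1 t ^ 2)"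
  defines "X2 \<equiv> \<lambda>t. q2 t - 4 * v t * (p2 t - q1 t ^ 2) + 12 * v t ^ 2 * q1 t + 4 * v t ^ 3"
  defines "Y2 \<equiv> \<lambda>t. p2 t - 4 * v t * q1 t - 2 * v t ^ 2"
  shows "(X1 has_field_derivative (X1 t ^ 2 + Y2 t)) (at t)
   \<and> (Y1 has_field_derivative (- 2 * X1 t * Y1 t + (-1-a) - 1/2)) (at t)
   \<and> (X2 has_field_derivative (- 3 * Y2 t ^ 2 + Y1 t + t / 2)) (at t)
   \<and> (Y2 has_field_derivative (X2 t)) (at t)"
proof -
  have nz': "Pf t \<noteq> 0" using nz by (simp add: Pf_def)
  have dP: "(Pf has_field_derivative (2 * q1 t * Pf t + (2*a+1)/2)) (at t)"
    unfolding Pf_def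
    apply (rule derivative_eq_intros d1 d2 d3 d4 refl | simp)+
    apply (simp add: field_simps)
    apply algebra
    done
  have rel: "2*a+1 = 2 * v t * Pf t" using nz' by (simp add: v_def)
  have dv: "(v has_field_derivative (-2 * q1 t * v t - v t ^ 2)) (at t)"
    unfolding v_def
    apply (rule derivative_eq_intros dP refl | simp add: nz')+
    apply (simp add: field_simps nz' power2_eq_square)
    done
  have g1: "(X1 has_field_derivative (X1 t ^ 2 + Y2 t)) (at t)"
    unfolding X1_def Y2_def
    apply (rule derivative_eq_intros d1 d2 d3 d4 dv refl | simp)+
    apply (simp add: field_simps)
    apply algebra
    done
  have g2: "(Y1 has_field_derivative (- 2 * X1 t * Y1 t + (-1-a) - 1/2)) (at t)"
    unfolding X1_def Y1_def
    apply (rule derivative_eq_intros d1 d2 d3 d4 dv refl | simp)+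
    using rel unfolding Pf_def
    apply (simp add: field_simps)
    apply algebra
    done
  have g3: "(X2 has_field_derivative (- 3 * Y2 t ^ 2 + Y1 t + t / 2)) (at t)"
    unfolding X2_def Y1_def Y2_def
    apply (rule derivative_eq_intros d1 d2 d3 d4 dv refl | simp)+
    apply (simp add: field_simps)
    apply (simp add: eval_nat_numeral algebra_simps)
    done
  have g4: "(Y2 has_field_derivative (X2 t)) (at t)"
    unfolding X2_def Y2_def
    apply (rule derivative_eq_intros d1 d2 d3 d4 dv refl | simp)+
    apply (simp add: field_simps)
    apply (simp add: eval_nat_numeral algebra_simps)
    done
  show ?thesis using g1 g2 g3 g4 by blast
qed

lemma s1_gen:
  fixes P b v X :: complex
  assumes "P \<noteq> 0" "v = b / (2 * P)"
  shows "b / (2 * P) = v" "2 * b * X / P = 4 * v * X" "b^2 * X / P^2 = 4 * v^2 * X"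
    "3 * b^2 * X / P^2 = 12 * v^2 * X" "b^3 / (2 * P^3) = 4 * v^3" "b^2 / (2 * P^2) = 2 * v^2"
proof -
  have b: "b = 2 * v * P" using assms by (simp add: field_simps)
  show "b / (2 * P) = v" "2 * b * X / P = 4 * v * X" "b^2 * X / P^2 = 4 * v^2 * X"
    "3 * b^2 * X / P^2 = 12 * v^2 * X" "b^3 / (2 * P^3) = 4 * v^3" "b^2 / (2 * P^2) = 2 * v^2"
    unfolding b using assms(1) by (simp_all add: field_simps power2_eq_square power3_eq_cube)
qed

lemma s1_eq:
  assumes "PP (q1,p1,q2,p2,t,a) \<noteq> 0"
  shows "s1 (q1,p1,q2,p2,t,a) =
    (let v = (2*a+1) / (2 * PP (q1,p1,q2,p2,t,a)) in
     (q1 + v, p1 - 4 * v * (q2 + 2 * q1 * p2) + 4 * v ^ 2 * (p2 + 2 * q1 ^ 2),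
      q2 - 4 * v * (p2 - q1 ^ 2) + 12 * v ^ 2 * q1 + 4 * v ^ 3,
      p2 - 4 * v * q1 - 2 * v ^ 2, t, -1-a))"
proof -
  define P where "P = PP (q1,p1,q2,p2,t,a)"
  define v where "v = (2*a+1) / (2 * P)"
  have nz: "P \<noteq> 0" using assms P_def by simp
  have "s1 (q1,p1,q2,p2,t,a) = (q1 + (2*a+1) / (2 * P),
      p1 - 2 * (2*a+1) * (q2 + 2 * q1 * p2) / P + (2*a+1)^2 * (p2 + 2 * q1^2) / P^2,
      q2 - 2 * (2*a+1) * (p2 - q1^2) / P + 3 * (2*a+1)^2 * q1 / P^2 + (2*a+1)^3 / (2 * P^3),
      p2 - 2 * (2*a+1) * q1 / P - (2*a+1)^2 / (2 * P^2),
      t, - 1 - a)"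
    unfolding s1_def P_def Let_def by simp
  also have "\<dots> = (q1 + v, p1 - 4 * v * (q2 + 2 * q1 * p2) + 4 * v ^ 2 * (p2 + 2 * q1 ^ 2),
      q2 - 4 * v * (p2 - q1 ^ 2) + 12 * v ^ 2 * q1 + 4 * v ^ 3,
      p2 - 4 * v * q1 - 2 * v ^ 2, t, -1-a)"
    using s1_gen[OF nz v_def] by simp
  finally show ?thesis unfolding Let_def v_def P_def .
qed

lemma PPs1_poly:
  fixes q1 p1 q2 p2 t v P :: complex
  assumes "P = p1 + t - 2 * p2^2 + 4 * q1 * (q2 + q1 * p2)"
  shows "(p1 - 4 * v * (q2 + 2 * q1 * p2) + 4 * v^2 * (p2 + 2 * q1^2)) + t
     - 2 * (p2 - 4 * v * q1 - 2 * v^2)^2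
     + 4 * (q1 + v) * ((q2 - 4 * v * (p2 - q1^2) + 12 * v^2 * q1 + 4 * v^3) + (q1 + v) * (p2 - 4 * v * q1 - 2 * v^2)) = P"
  using assms by algebra

lemma PP_s1:
  assumes nz: "PP (q1,p1,q2,p2,t,a) \<noteq> 0"
  shows "PP (s1 (q1,p1,q2,p2,t,a)) = PP (q1,p1,q2,p2,t,a)"
proof -
  define P where "P = p1 + t - 2 * p2 ^ 2 + 4 * q1 * (q2 + q1 * p2)"
  define v where "v = (2*a+1) / (2 * P)"
  have PPP: "PP (q1,p1,q2,p2,t,a) = P" by (simp add: PP_def P_def)
  have e1: "s1 (q1,p1,q2,p2,t,a) = (q1 + v, p1 - 4 * v * (q2 + 2 * q1 * p2) + 4 * v ^ 2 * (p2 + 2 * q1 ^ 2),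
      q2 - 4 * v * (p2 - q1 ^ 2) + 12 * v ^ 2 * q1 + 4 * v ^ 3,
      p2 - 4 * v * q1 - 2 * v ^ 2, t, -1-a)"
    using s1_eq[OF nz] PPP by (simp add: Let_def v_def)
  show ?thesis unfolding e1 PPP
    unfolding PP_def prod.case
    by (rule PPs1_poly[OF P_def])
qed

lemma s1s1:
  assumes "PP x \<noteq> 0" shows "s1 (s1 x) = x"
proof -
  obtain q1 p1 q2 p2 t a where x: "x = (q1,p1,q2,p2,t,a)" by (cases x) auto
  define P where "P = p1 + t - 2 * p2 ^ 2 + 4 * q1 * (q2 + q1 * p2)"
  define v where "v = (2*a+1) / (2 * P)"
  have nz: "PP (q1,p1,q2,p2,t,a) \<noteq> 0" using assms x by simp
  have nz2: "PP (s1 (q1,p1,q2,p2,t,a)) \<noteq> 0" using nz PP_s1[OF nz] by simp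
  have PPP: "PP (q1,p1,q2,p2,t,a) = P" by (simp add: PP_def P_def)
  have Pnz: "P \<noteq> 0" using nz PPP by simp
  have e1: "s1 (q1,p1,q2,p2,t,a) = (q1 + v, p1 - 4 * v * (q2 + 2 * q1 * p2) + 4 * v ^ 2 * (p2 + 2 * q1 ^ 2),
      q2 - 4 * v * (p2 - q1 ^ 2) + 12 * v ^ 2 * q1 + 4 * v ^ 3,
      p2 - 4 * v * q1 - 2 * v ^ 2, t, -1-a)"
    using s1_eq[OF nz] PPP by (simp add: Let_def v_def)
  have PP2: "PP (s1 (q1,p1,q2,p2,t,a)) = P" using PP_s1[OF nz] PPP by simp
  have vv: "(2*(-1-a)+1) / (2 * P) = - v" using Pnz by (simp add: v_def field_simps)
  have "s1 (s1 (q1,p1,q2,p2,t,a)) = (let w = - v;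
      q1' = q1 + v; p1' = p1 - 4 * v * (q2 + 2 * q1 * p2) + 4 * v ^ 2 * (p2 + 2 * q1 ^ 2);
      q2' = q2 - 4 * v * (p2 - q1 ^ 2) + 12 * v ^ 2 * q1 + 4 * v ^ 3;
      p2' = p2 - 4 * v * q1 - 2 * v ^ 2 in
     (q1' + w, p1' - 4 * w * (q2' + 2 * q1' * p2') + 4 * w ^ 2 * (p2' + 2 * q1' ^ 2),
      q2' - 4 * w * (p2' - q1' ^ 2) + 12 * w ^ 2 * q1' + 4 * w ^ 3,
      p2' - 4 * w * q1' - 2 * w ^ 2, t, -1-(-1-a)))"
    unfolding e1 s1_eq[OF nz2[unfolded e1]] PP2[unfolded e1] vv Let_def ..
  also have "\<dots> = (q1,p1,q2,p2,t,a)"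
    unfolding Let_def
    apply (simp only: prod.inject)
    apply (intro conjI)
    apply simp
    apply (simp add: power2_eq_square power3_eq_cube algebra_simps)
    apply (simp add: power2_eq_square power3_eq_cube algebra_simps)
    apply (simp add: power2_eq_square power3_eq_cube algebra_simps)
    apply simp
    apply simp
    done
  finally show ?thesis using x by simp
qed

lemma pipi: "pi_map (pi_map x) = x"
proof -
  obtain q1 p1 q2 p2 t a where x: "x = (q1,p1,q2,p2,t,a)" by (cases x) auto
  show ?thesis unfolding x pi_map_def PP_def
    apply simp
    apply (intro conjI)
    apply (simp add: power2_eq_square power3_eq_cube algebra_simps)
    apply (simp add: power2_eq_square power3_eq_cube algebra_simps)
    done
qed

lemma s0s0: assumes "c_p1 x \<noteq> 0" shows "s0 (s0 x) = x"
proof -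
  obtain q1 p1 q2 p2 t a where x: "x = (q1,p1,q2,p2,t,a)" by (cases x) auto
  show ?thesis using assms unfolding x s0_def c_p1_def
    by (simp add: field_simps)
qed

lemma s0pi: assumes "PP x \<noteq> 0" shows "s0 (pi_map x) = pi_map (s1 x)"
proof -
  obtain q1 p1 q2 p2 t a where x: "x = (q1,p1,q2,p2,t,a)" by (cases x) auto
  define P where "P = p1 + t - 2 * p2 ^ 2 + 4 * q1 * (q2 + q1 * p2)"
  define v where "v = (2*a+1) / (2 * P)"
  have nz: "PP (q1,p1,q2,p2,t,a) \<noteq> 0" using assms x by simp
  have PPP: "PP (q1,p1,q2,p2,t,a) = P" by (simp add: PP_def P_def)
  have Pnz: "P \<noteq> 0" using nz PPP by simp
  have e1: "s1 (q1,p1,q2,p2,t,a) = (q1 + v, p1 - 4 * v * (q2 + 2 * q1 * p2) + 4 * v ^ 2 * (p2 + 2 * q1 ^ 2),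
      q2 - 4 * v * (p2 - q1 ^ 2) + 12 * v ^ 2 * q1 + 4 * v ^ 3,
      p2 - 4 * v * q1 - 2 * v ^ 2, t, -1-a)"
    using s1_eq[OF nz] PPP by (simp add: Let_def v_def)
  have PP2: "PP (s1 (q1,p1,q2,p2,t,a)) = P" using PP_s1[OF nz] PPP by simp
  have vv: "(1/2 - -a) / - P = - v" using Pnz by (simp add: v_def field_simps)
  have A: "s0 (pi_map (q1,p1,q2,p2,t,a)) = (- q1 - v, - P, - (q2 + 4 * q1 * (q1^2 + p2)), - (p2 + 2 * q1^2), t, 1 + a)"
    unfolding pi_map_def s0_def PPP using vv by simp
  have B: "pi_map (s1 (q1,p1,q2,p2,t,a)) = (- (q1 + v), - P,
     - ((q2 - 4 * v * (p2 - q1 ^ 2) + 12 * v ^ 2 * q1 + 4 * v ^ 3) + 4 * (q1 + v) * ((q1 + v)^2 + (p2 - 4 * v * q1 - 2 * v ^ 2))),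
     - ((p2 - 4 * v * q1 - 2 * v ^ 2) + 2 * (q1 + v)^2), t, - (-1 - a))"
    using PP2 unfolding e1 pi_map_def by simp
  show ?thesis unfolding x A B
    apply (simp only: prod.inject)
    apply (intro conjI)
    apply simp
    apply simp
    apply (simp add: power2_eq_square power3_eq_cube algebra_simps)
    apply (simp add: power2_eq_square power3_eq_cube algebra_simps)
    apply simp
    apply simp
    done
qed

lemma backlund_I:
  assumes "\<And>a q1 p1 q2 p2 U t. is_solution a q1 p1 q2 p2 U \<Longrightarrow>
     (\<forall>s\<in>U. D (q1 s, p1 s, q2 s, p2 s, s, a)) \<Longrightarrow> t \<in> U \<Longrightarrow>
     (let W = (\<lambda>s. w (q1 s, p1 s, q2 s, p2 s, s, a)) in
      c_t (W t) = t \<and> c_a (W t) = tau a \<and>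
      ((\<lambda>s. c_q1 (W s)) has_field_derivative (c_q1 (W t) ^ 2 + c_p2 (W t))) (at t) \<and>
      ((\<lambda>s. c_p1 (W s)) has_field_derivative (- 2 * c_q1 (W t) * c_p1 (W t) + tau a - 1/2)) (at t) \<and>
      ((\<lambda>s. c_q2 (W s)) has_field_derivative (- 3 * c_p2 (W t) ^ 2 + c_p1 (W t) + t / 2)) (at t) \<and>
      ((\<lambda>s. c_p2 (W s)) has_field_derivative (c_q2 (W t))) (at t))"
  shows "backlund w D tau"
  unfolding backlund_def Let_def
proof (intro allI impI conjI ballI)
  fix a q1 p1 q2 p2 U t
  assume h: "is_solution a q1 p1 q2 p2 U \<and> (\<forall>t\<in>U. D (q1 t, p1 t, q2 t, p2 t, t, a))"
  show "c_t (w (q1 t, p1 t, q2 t, p2 t, t, a)) = t" if "t \<in> U"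
    using assms[of a q1 p1 q2 p2 U t] h that by (simp add: Let_def)
  show "c_a (w (q1 t, p1 t, q2 t, p2 t, t, a)) = tau a" if "t \<in> U"
    using assms[of a q1 p1 q2 p2 U t] h that by (simp add: Let_def)
next
  fix a q1 p1 q2 p2 U
  assume h: "is_solution a q1 p1 q2 p2 U \<and> (\<forall>t\<in>U. D (q1 t, p1 t, q2 t, p2 t, t, a))"
  show "is_solution (tau a) (\<lambda>t. c_q1 (w (q1 t, p1 t, q2 t, p2 t, t, a)))
        (\<lambda>t. c_p1 (w (q1 t, p1 t, q2 t, p2 t, t, a))) (\<lambda>t. c_q2 (w (q1 t, p1 t, q2 t, p2 t, t, a)))
        (\<lambda>t. c_p2 (w (q1 t, p1 t, q2 t, p2 t, t, a))) U"
    unfolding is_solution_def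
  proof (intro conjI ballI)
    show "open U" using h by (simp add: is_solution_def)
  next
    fix t assume "t \<in> U"
    then show "((\<lambda>t. c_q1 (w (q1 t, p1 t, q2 t, p2 t, t, a))) has_field_derivative
       (c_q1 (w (q1 t, p1 t, q2 t, p2 t, t, a)))\<^sup>2 + c_p2 (w (q1 t, p1 t, q2 t, p2 t, t, a))) (at t)"
      "((\<lambda>t. c_p1 (w (q1 t, p1 t, q2 t, p2 t, t, a))) has_field_derivative
       - 2 * c_q1 (w (q1 t, p1 t, q2 t, p2 t, t, a)) * c_p1 (w (q1 t, p1 t, q2 t, p2 t, t, a)) + tau a - 1 / 2) (at t)"
      "((\<lambda>t. c_q2 (w (q1 t, p1 t, q2 t, p2 t, t, a))) has_field_derivative
       - 3 * (c_p2 (w (q1 t, p1 t, q2 t, p2 t, t, a)))\<^sup>2 + c_p1 (w (q1 t, p1 t, q2 t, p2 t, t, a)) + t / 2) (at t)"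
      "((\<lambda>t. c_p2 (w (q1 t, p1 t, q2 t, p2 t, t, a))) has_field_derivative
       c_q2 (w (q1 t, p1 t, q2 t, p2 t, t, a))) (at t)"
      using assms[of a q1 p1 q2 p2 U t] h by (simp_all add: Let_def)
  qed
qed

lemma sol_at:
  assumes "is_solution a q1 p1 q2 p2 U" "t \<in> U"
  shows "open U" "(q1 has_field_derivative (q1 t ^ 2 + p2 t)) (at t)"
   "(p1 has_field_derivative (- 2 * q1 t * p1 t + a - 1/2)) (at t)"
   "(q2 has_field_derivative (- 3 * p2 t ^ 2 + p1 t + t / 2)) (at t)"
   "(p2 has_field_derivative (q2 t)) (at t)"
  using assms unfolding is_solution_def by auto

lemma s1_bl: "backlund s1 (\<lambda>x. PP x \<noteq> 0) (\<lambda>a. - 1 - a)"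
proof (rule backlund_I)
  fix a q1 p1 q2 p2 U t
  assume sol: "is_solution a q1 p1 q2 p2 U" and D: "\<forall>s\<in>U. PP (q1 s, p1 s, q2 s, p2 s, s, a) \<noteq> 0"
    and tU: "t \<in> U"
  note S = sol_at[OF sol tU]
  define Pf where "Pf \<equiv> \<lambda>t. p1 t + t - 2 * p2 t ^ 2 + 4 * q1 t * (q2 t + q1 t * p2 t)"
  define v where "v \<equiv> \<lambda>t. (2*a+1) / (2 * Pf t)"
  define X1 where "X1 \<equiv> \<lambda>t. q1 t + v t"
  define Y1 where "Y1 \<equiv> \<lambda>t. p1 t - 4 * v t * (q2 t + 2 * q1 t * p2 t) + 4 * v t ^ 2 * (p2 t + 2 * q1 t ^ 2)"
  define X2 where "X2 \<equiv> \<lambda>t. q2 t - 4 * v t * (p2 t - q1 t ^ 2) + 12 * v t ^ 2 * q1 t + 4 * v t ^ 3"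
  define Y2 where "Y2 \<equiv> \<lambda>t. p2 t - 4 * v t * q1 t - 2 * v t ^ 2"
  have eq: "s1 (q1 s, p1 s, q2 s, p2 s, s, a) = (X1 s, Y1 s, X2 s, Y2 s, s, -1-a)" if "s \<in> U" for s
    using s1_eq[OF D[rule_format, OF that]]
    by (simp add: Let_def X1_def Y1_def X2_def Y2_def v_def Pf_def PP_def)
  have nz: "p1 t + t - 2 * p2 t ^ 2 + 4 * q1 t * (q2 t + q1 t * p2 t) \<noteq> 0"
    using D tU by (simp add: PP_def)
  have P: "(X1 has_field_derivative (X1 t ^ 2 + Y2 t)) (at t)
   \<and> (Y1 has_field_derivative (- 2 * X1 t * Y1 t + (-1-a) - 1/2)) (at t)
   \<and> (X2 has_field_derivative (- 3 * Y2 t ^ 2 + Y1 t + t / 2)) (at t)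
   \<and> (Y2 has_field_derivative (X2 t)) (at t)"
    using s1_point[OF S(2-5) nz] unfolding X1_def Y1_def X2_def Y2_def v_def Pf_def .
  have T: "((\<lambda>s. F (s1 (q1 s, p1 s, q2 s, p2 s, s, a))) has_field_derivative d) (at t)"
    if "(G has_field_derivative d) (at t)" "\<And>s. s \<in> U \<Longrightarrow> F (s1 (q1 s, p1 s, q2 s, p2 s, s, a)) = G s" for F G d
    by (rule has_field_derivative_transform_within_open[OF that(1) S(1) tU]) (simp add: that(2))
  show "let W = (\<lambda>s. s1 (q1 s, p1 s, q2 s, p2 s, s, a)) in
      c_t (W t) = t \<and> c_a (W t) = - 1 - a \<and>
      ((\<lambda>s. c_q1 (W s)) has_field_derivative (c_q1 (W t) ^ 2 + c_p2 (W t))) (at t) \<and>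
      ((\<lambda>s. c_p1 (W s)) has_field_derivative (- 2 * c_q1 (W t) * c_p1 (W t) + (- 1 - a) - 1/2)) (at t) \<and>
      ((\<lambda>s. c_q2 (W s)) has_field_derivative (- 3 * c_p2 (W t) ^ 2 + c_p1 (W t) + t / 2)) (at t) \<and>
      ((\<lambda>s. c_p2 (W s)) has_field_derivative (c_q2 (W t))) (at t)"
    unfolding Let_def eq[OF tU]
    apply (intro conjI)
    apply (simp add: c_t_def)
    apply (simp add: c_a_def)
    apply (rule T[where G=X1]) using P apply (simp add: c_q1_def c_p2_def) apply (simp add: eq c_q1_def)
    apply (rule T[where G=Y1]) using P apply (simp add: c_q1_def c_p1_def) apply (simp add: eq c_p1_def)
    apply (rule T[where G=X2]) using P apply (simp add: c_p1_def c_p2_def) apply (simp add: eq c_q2_def)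
    apply (rule T[where G=Y2]) using P apply (simp add: c_q2_def) apply (simp add: eq c_p2_def)
    done
qed

lemma s0_bl: "backlund s0 (\<lambda>x. c_p1 x \<noteq> 0) (\<lambda>a. 1 - a)"
proof (rule backlund_I)
  fix a q1 p1 q2 p2 U t
  assume sol: "is_solution a q1 p1 q2 p2 U" and D: "\<forall>s\<in>U. c_p1 (q1 s, p1 s, q2 s, p2 s, s, a) \<noteq> 0"
    and tU: "t \<in> U"
  note S = sol_at[OF sol tU]
  define X1 where "X1 \<equiv> \<lambda>t. q1 t + (1/2 - a) / p1 t"
  have eq: "s0 (q1 s, p1 s, q2 s, p2 s, s, a) = (X1 s, p1 s, q2 s, p2 s, s, 1-a)" for s
    by (simp add: X1_def s0_def)
  have nz: "p1 t \<noteq> 0" using D tU by (simp add: c_p1_def)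
  have P1: "(X1 has_field_derivative (X1 t ^ 2 + p2 t)) (at t)"
    unfolding X1_def
    apply (rule derivative_eq_intros S(2-5) refl | simp add: nz)+
    using nz apply (simp add: field_simps)
    apply (simp add: power2_eq_square eval_nat_numeral algebra_simps)?
    done
  have P2: "(p1 has_field_derivative (- 2 * X1 t * p1 t + (1-a) - 1/2)) (at t)"
  proof -
    have "- 2 * X1 t * p1 t + (1-a) - 1/2 = - 2 * q1 t * p1 t + a - 1/2"
      using nz by (simp add: X1_def field_simps)
    show ?thesis unfolding \<open>- 2 * X1 t * p1 t + (1-a) - 1/2 = - 2 * q1 t * p1 t + a - 1/2\<close> by (rule S(3))
  qed
  have T: "((\<lambda>s. F (s0 (q1 s, p1 s, q2 s, p2 s, s, a))) has_field_derivative d) (at t)"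
    if "(G has_field_derivative d) (at t)" "\<And>s. s \<in> U \<Longrightarrow> F (s0 (q1 s, p1 s, q2 s, p2 s, s, a)) = G s" for F G d
    by (rule has_field_derivative_transform_within_open[OF that(1) S(1) tU]) (simp add: that(2))
  show "let W = (\<lambda>s. s0 (q1 s, p1 s, q2 s, p2 s, s, a)) in
      c_t (W t) = t \<and> c_a (W t) = 1 - a \<and>
      ((\<lambda>s. c_q1 (W s)) has_field_derivative (c_q1 (W t) ^ 2 + c_p2 (W t))) (at t) \<and>
      ((\<lambda>s. c_p1 (W s)) has_field_derivative (- 2 * c_q1 (W t) * c_p1 (W t) + (1 - a) - 1/2)) (at t) \<and>
      ((\<lambda>s. c_q2 (W s)) has_field_derivative (- 3 * c_p2 (W t) ^ 2 + c_p1 (W t) + t / 2)) (at t) \<and>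
      ((\<lambda>s. c_p2 (W s)) has_field_derivative (c_q2 (W t))) (at t)"
    unfolding Let_def eq[of t]
    apply (intro conjI)
    apply (simp add: c_t_def)
    apply (simp add: c_a_def)
    apply (rule T[where G=X1]) using P1 apply (simp add: c_q1_def c_p2_def) apply (simp add: eq c_q1_def)
    apply (rule T[where G=p1]) using P2 apply (simp add: c_q1_def c_p1_def) apply (simp add: eq c_p1_def)
    apply (rule T[where G=q2]) using S(4) apply (simp add: c_p1_def c_p2_def) apply (simp add: eq c_q2_def)
    apply (rule T[where G=p2]) using S(5) apply (simp add: c_q2_def) apply (simp add: eq c_p2_def)
    done
qed

lemma pi_bl: "backlund pi_map (\<lambda>x. True) (\<lambda>a. - a)"
proof (rule backlund_I)
  fix a q1 p1 q2 p2 U t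
  assume sol: "is_solution a q1 p1 q2 p2 U" and tU: "t \<in> U"
  note S = sol_at[OF sol tU]
  define X1 where "X1 \<equiv> \<lambda>t. - q1 t"
  define Y1 where "Y1 \<equiv> \<lambda>t. - (p1 t + t - 2 * p2 t ^ 2 + 4 * q1 t * (q2 t + q1 t * p2 t))"
  define X2 where "X2 \<equiv> \<lambda>t. - (q2 t + 4 * q1 t * (q1 t ^ 2 + p2 t))"
  define Y2 where "Y2 \<equiv> \<lambda>t. - (p2 t + 2 * q1 t ^ 2)"
  have eq: "pi_map (q1 s, p1 s, q2 s, p2 s, s, a) = (X1 s, Y1 s, X2 s, Y2 s, s, -a)" for s
    by (simp add: X1_def Y1_def X2_def Y2_def pi_map_def PP_def)
  have P1: "(X1 has_field_derivative (X1 t ^ 2 + Y2 t)) (at t)"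
    unfolding X1_def Y2_def
    apply (rule derivative_eq_intros S(2-5) refl | simp)+
    done
  have P2: "(Y1 has_field_derivative (- 2 * X1 t * Y1 t + (-a) - 1/2)) (at t)"
    unfolding X1_def Y1_def
    apply (rule derivative_eq_intros S(2-5) refl | simp)+
    apply (simp add: field_simps)
    apply (simp add: power2_eq_square eval_nat_numeral algebra_simps)?
    done
  have P3: "(X2 has_field_derivative (- 3 * Y2 t ^ 2 + Y1 t + t / 2)) (at t)"
    unfolding X2_def Y1_def Y2_def
    apply (rule derivative_eq_intros S(2-5) refl | simp)+
    apply (simp add: field_simps)
    apply (simp add: power2_eq_square eval_nat_numeral algebra_simps)?
    done
  have P4: "(Y2 has_field_derivative (X2 t)) (at t)"
    unfolding X2_def Y2_def
    apply (rule derivative_eq_intros S(2-5) refl | simp)+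
    apply (simp add: power2_eq_square eval_nat_numeral algebra_simps)?
    done
  have T: "((\<lambda>s. F (pi_map (q1 s, p1 s, q2 s, p2 s, s, a))) has_field_derivative d) (at t)"
    if "(G has_field_derivative d) (at t)" "\<And>s. F (pi_map (q1 s, p1 s, q2 s, p2 s, s, a)) = G s" for F G d
    using that by simp
  show "let W = (\<lambda>s. pi_map (q1 s, p1 s, q2 s, p2 s, s, a)) in
      c_t (W t) = t \<and> c_a (W t) = - a \<and>
      ((\<lambda>s. c_q1 (W s)) has_field_derivative (c_q1 (W t) ^ 2 + c_p2 (W t))) (at t) \<and>
      ((\<lambda>s. c_p1 (W s)) has_field_derivative (- 2 * c_q1 (W t) * c_p1 (W t) + (- a) - 1/2)) (at t) \<and>
      ((\<lambda>s. c_q2 (W s)) has_field_derivative (- 3 * c_p2 (W t) ^ 2 + c_p1 (W t) + t / 2)) (at t) \<and>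
      ((\<lambda>s. c_p2 (W s)) has_field_derivative (c_q2 (W t))) (at t)"
    unfolding Let_def eq[of t]
    apply (intro conjI)
    apply (simp add: c_t_def)
    apply (simp add: c_a_def)
    apply (rule T[where G=X1]) using P1 apply (simp add: c_q1_def c_p2_def) apply (simp add: eq c_q1_def)
    apply (rule T[where G=Y1]) using P2 apply (simp add: c_q1_def c_p1_def) apply (simp add: eq c_p1_def)
    apply (rule T[where G=X2]) using P3 apply (simp add: c_p1_def c_p2_def) apply (simp add: eq c_q2_def)
    apply (rule T[where G=Y2]) using P4 apply (simp add: c_q2_def) apply (simp add: eq c_p2_def)
    done
qed

theorem theorem6p2:
  shows "backlund s0 (\<lambda>x. c_p1 x \<noteq> 0) (\<lambda>a. 1 - a)
     \<and> backlund s1 (\<lambda>x. PP x \<noteq> 0) (\<lambda>a. - 1 - a)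
     \<and> backlund pi_map (\<lambda>x. True) (\<lambda>a. - a)
     \<and> (\<forall>x. c_p1 x \<noteq> 0 \<longrightarrow> s0 (s0 x) = x)
     \<and> (\<forall>x. PP x \<noteq> 0 \<longrightarrow> s1 (s1 x) = x)
     \<and> (\<forall>x. pi_map (pi_map x) = x)
     \<and> (\<forall>x. PP x \<noteq> 0 \<longrightarrow> s0 (pi_map x) = pi_map (s1 x))"
  using s0_bl s1_bl pi_bl s0s0 s1s1 pipi s0pi by blast

end
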